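(* Let $a=(p_a,Rd_a,Wt_a)\in\mathsf{Lab}$ and $\beta\in\mathsf{Lab}\uplus\underline{\mathsf{Lab}}$ with $\mathsf{und}(\beta)=(p_\beta,Rd_\beta,Wt_\beta)$, and assume $Wt_a\subseteq Rd_a$ and $Wt_\beta\subseteq Rd_\beta$. Suppose $A\to_{ann}^{a}A'$ and $A\to_{ann}^{\beta}A''$ with $a\;\iota_{lab}\;\beta$. Then there is an annotation DAG $A'''$ such that $A''\to_{ann}^{a}A'''$ and $\mathsf{diff}(A\to_{ann}^{a}A')=\mathsf{diff}(A''\to_{ann}^{a}A''')$.
   Context: Fix a set $\mathcal{R}$ of memory resources. Let $\mathsf{PID}=(\mathbb{N}_+)^*$ be the set of finite words over the positive integers, with $\preceq$ the prefix order. An annotation DAG is a triple $A=(V,E_R,E_W)$ such that: (1) $V\subseteq(\mathsf{PID}\times\mathbb{N})\cup\{\bot\}$ is finite, $\bot\in V$, and $(p,n)\in V$ implies $(p,n')\in V$ for all $n'\le n$; (2) $E_R,E_W\subseteq V\times\mathcal{R}\times V$, and $(v',r,v),(v'',r,v)\in E_R\cup E_W$ implies $v'=v''$; (3) $E_R\cap E_W=\varnothing$ and the directed graph $(V,E_R\cup E_W)$ is acyclic; (4) if $(v',r,v)\in E_W$ and $v'\neq\bot$ then $(v'',r,v')\in E_W$ for some $v''$; (5) $(v,r,v'),(v,r,v'')\in E_W$ implies $v'=v''$. For $r\in\mathcal{R}$, $\mathsf{last}(r,E_W)$ is $\bot$ if $E_W$ has no edge labelled $r$, and otherwise is the final node of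 the unique path from $\bot$ consisting of all $E_W$-edges labelled $r$. For $p\in\mathsf{PID}$, $\mathsf{max}_p(V)=\max\{n:(p,n)\in V\}$, or $-1$ if there is no such $n$. Let $\mathsf{Lab}=\mathsf{PID}\times2^{\mathcal{R}}\times2^{\mathcal{R}}$ and $\underline{\mathsf{Lab}}=\{\underline{a}:a\in\mathsf{Lab}\}$ a disjoint copy; $\mathsf{und}(a)=\mathsf{und}(\underline a)=a$. For $a=(p,Rd,Wt)\in\mathsf{Lab}$ and annotation DAGs $A_1=(V_1,E_{R1},E_{W1})$, $A_2=(V_2,E_{R2},E_{W2})$, write $A_1\to_{ann}^{a}A_2$ iff, with $v=(p,\mathsf{max}_p(V_1)+1)$ and $\mathsf{newedge}(r,E_W,v)=(\mathsf{last}(r,E_W),r,v)$: $V_2=V_1\cup\{v\}$, $E_{R2}=E_{R1}\cup\{\mathsf{newedge}(r,E_{W1},v): r\in Rd\setminus Wt\}$, $E_{W2}=E_{W1}\cup\{\mathsf{newedge}(r,E_{W1},v): r\in Wt\}$; and write $A_2\to_{ann}^{\underline a}A_1$ iff $A_1\to_{ann}^{a}A_2$. For $\alpha,\beta\in\mathsf{Lab}\uplus\underline{\mathsf{Lab}}$ with $\mathsf{und}(\alpha)=(p_1,Rd_1,Wt_1)$, $\mathsf{und}(\beta)=(p_2,Rd_2,Wt_2)$, define $\alpha\;\iota_{lab}\;\beta$ iff $p_1\not\preceq p_2$, $p_2\not\preceq p_1$, $Rd_1\cap Wt_2=\varnothing$ and $Rd_2\cap Wt_1=\varnothing$. For $o:(V,E_R,E_W)\to_{ann}^{\alpha}(V',E'_R,E'_W)$,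 $\mathsf{diff}(o)=(V'\setminus V,E'_R\setminus E_R,E'_W\setminus E_W)$ if $\alpha\in\mathsf{Lab}$ and $\mathsf{diff}(o)=(V\setminus V',E_R\setminus E'_R,E_W\setminus E'_W)$ if $\alpha\in\underline{\mathsf{Lab}}$. (In the paper, labels arise from basic blocks for which the set of written resources is contained in the set of read resources; this is recorded here as the hypothesis $Wt\subseteq Rd$.) *)

theory Defs
  imports Main "HOL-Library.Sublist"
begin

definition is_pid :: "nat list \<Rightarrow> bool" where
  "is_pid p \<longleftrightarrow> (\<forall>x\<in>set p. 0 < x)"

datatype node = Bot | Nd "nat list" nat

type_synonym 'r edge = "node \<times> 'r \<times> node"
type_synonym 'r ann = "node set \<times> 'r edge set \<times> 'r edge set"

definition edge_rel :: "'r edge set \<Rightarrow> (node \<times> node) set" where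
  "edge_rel E = {(u, v). \<exists>r. (u, r, v) \<in> E}"

definition ann_dag :: "'r ann \<Rightarrow> bool" where
  "ann_dag A \<longleftrightarrow> (case A of (V, ER, EW) \<Rightarrow>
     finite V \<and> Bot \<in> V \<and>
     (\<forall>p n. Nd p n \<in> V \<longrightarrow> is_pid p \<and> (\<forall>n'\<le>n. Nd p n' \<in> V)) \<and>
     (\<forall>(u, r, v)\<in>ER \<union> EW. u \<in> V \<and> v \<in> V) \<and>
     (\<forall>v' v'' r v. (v', r, v) \<in> ER \<union> EW \<and> (v'', r, v) \<in> ER \<union> EW \<longrightarrow> v' = v'') \<and>
     ER \<inter> EW = {} \<and> acyclic (edge_rel (ER \<union> EW)) \<and>
     (\<forall>v' r v. (v', r, v) \<in> EW \<and> v' \<noteq> Bot \<longrightarrow> (\<exists>v''. (v'', r, v') \<in> EW)) \<and>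
     (\<forall>v r v' v''. (v, r, v') \<in> EW \<and> (v, r, v'') \<in> EW \<longrightarrow> v' = v''))"

text \<open>last(r, E_W): final node of the unique path from Bot consisting of all
  E_W-edges labelled r (Bot if there are none).\<close>
definition last_node :: "'r \<Rightarrow> 'r edge set \<Rightarrow> node" where
  "last_node r EW = (if \<not> (\<exists>u v. (u, r, v) \<in> EW) then Bot
     else (THE v. \<exists>xs. xs \<noteq> [] \<and> hd xs = Bot \<and> last xs = v \<and>
        {(xs ! i, r, xs ! Suc i) | i. Suc i < length xs} = {e \<in> EW. fst (snd e) = r}))"

definition maxp :: "node set \<Rightarrow> nat list \<Rightarrow> int" where
  "maxp V p = (if \<exists>n. Nd p n \<in> V then int (Max {n. Nd p n \<in> V}) else -1)"

definition newedge :: "'r \<Rightarrow> 'r edge set \<Rightarrow> node \<Rightarrow> 'r edge" where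
  "newedge r EW v = (last_node r EW, r, v)"

type_synonym 'r lab = "nat list \<times> 'r set \<times> 'r set"

definition ann_step :: "'r ann \<Rightarrow> 'r lab \<Rightarrow> 'r ann \<Rightarrow> bool" where
  "ann_step A1 a A2 \<longleftrightarrow> ann_dag A1 \<and> ann_dag A2 \<and>
     (case A1 of (V1, ER1, EW1) \<Rightarrow> case A2 of (V2, ER2, EW2) \<Rightarrow>
      case a of (p, Rd, Wt) \<Rightarrow>
        (let v = Nd p (nat (maxp V1 p + 1)) in
          V2 = V1 \<union> {v} \<and>
          ER2 = ER1 \<union> {newedge r EW1 v | r. r \<in> Rd - Wt} \<and>
          EW2 = EW1 \<union> {newedge r EW1 v | r. r \<in> Wt}))"

text \<open>Labels and underlined (backward) labels.\<close>
datatype 'r blab = Fw "'r lab" | Bw "'r lab"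

fun und :: "'r blab \<Rightarrow> 'r lab" where
  "und (Fw a) = a" | "und (Bw a) = a"

fun ann_trans :: "'r ann \<Rightarrow> 'r blab \<Rightarrow> 'r ann \<Rightarrow> bool" where
  "ann_trans A (Fw a) A' = ann_step A a A'"
| "ann_trans A (Bw a) A' = ann_step A' a A"

definition iota_lab :: "'r blab \<Rightarrow> 'r blab \<Rightarrow> bool" where
  "iota_lab \<alpha> \<beta> \<longleftrightarrow> (case und \<alpha> of (p1, Rd1, Wt1) \<Rightarrow> case und \<beta> of (p2, Rd2, Wt2) \<Rightarrow>
     \<not> prefix p1 p2 \<and> \<not> prefix p2 p1 \<and> Rd1 \<inter> Wt2 = {} \<and> Rd2 \<inter> Wt1 = {})"

fun ann_diff :: "'r ann \<Rightarrow> 'r blab \<Rightarrow> 'r ann \<Rightarrow> 'r ann" where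
  "ann_diff (V, ER, EW) (Fw a) (V', ER', EW') = (V' - V, ER' - ER, EW' - EW)"
| "ann_diff (V, ER, EW) (Bw a) (V', ER', EW') = (V - V', ER - ER', EW - EW')"

end

theory Submission imports Defs begin

definition pe :: "'r \<Rightarrow> node list \<Rightarrow> 'r edge set" where
  "pe r xs = {(xs ! i, r, xs ! Suc i) | i. Suc i < length xs}"

lemma pe_single: "pe r [x] = {}" by (simp add: pe_def)

lemma pe_snoc: "xs \<noteq> [] \<Longrightarrow> pe r (xs @ [y]) = pe r xs \<union> {(last xs, r, y)}"
proof (rule set_eqI, rule iffI)
  fix e assume xs: "xs \<noteq> []" and "e \<in> pe r (xs @ [y])"
  then obtain i where e: "e = ((xs@[y]) ! i, r, (xs@[y]) ! Suc i)" "Suc i < length xs + 1"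
    by (auto simp: pe_def)
  show "e \<in> pe r xs \<union> {(last xs, r, y)}"
  proof (cases "Suc i < length xs")
    case True thus ?thesis using e by (auto simp: pe_def nth_append)
  next
    case False
    hence si: "Suc i = length xs" using e by simp
    hence il: "i < length xs" by simp
    have "(xs@[y]) ! i = xs ! i" using il by (simp add: nth_append)
    also have "\<dots> = last xs" using si last_conv_nth[OF xs] by (metis diff_Suc_1)
    finally have 1: "(xs@[y]) ! i = last xs" .
    have 2: "(xs@[y]) ! Suc i = y" using si by (simp add: nth_append)
    show ?thesis using e(1) 1 2 by simp
  qed
next
  fix e assume xs: "xs \<noteq> []" and "e \<in> pe r xs \<union> {(last xs, r, y)}"
  then consider (a) i where "e = (xs ! i, r, xs ! Suc i)" "Suc i < length xs" | (b) "e = (last xs, r, y)"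
    by (auto simp: pe_def)
  thus "e \<in> pe r (xs @ [y])"
  proof cases
    case a
    have "(xs@[y]) ! i = xs ! i" "(xs@[y]) ! Suc i = xs ! Suc i" using a(2) by (simp_all add: nth_append)
    moreover have "Suc i < length (xs @ [y])" using a(2) by simp
    ultimately show ?thesis unfolding pe_def a(1) by (intro CollectI exI[of _ i]) simp
  next
    case b
    define i where "i = length xs - 1"
    have si: "Suc i = length xs" using xs by (simp add: i_def)
    have "(xs@[y]) ! i = xs ! i" using si by (simp add: nth_append)
    also have "\<dots> = last xs" using last_conv_nth[OF xs] by (simp add: i_def)
    finally have 1: "(xs@[y]) ! i = last xs" .
    have 2: "(xs@[y]) ! Suc i = y" using si by (simp add: nth_append)
    have "Suc i < length (xs @ [y])" using si by simp
    thus ?thesis unfolding pe_def b using 1 2 by (intro CollectI exI[of _ i]) simp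
  qed
qed

lemma edge_rel_mono: "S \<subseteq> T \<Longrightarrow> edge_rel S \<subseteq> edge_rel T"
  by (auto simp: edge_rel_def)

lemma edge_rel_Un: "edge_rel (S \<union> T) = edge_rel S \<union> edge_rel T"
  by (auto simp: edge_rel_def)

lemma pe_trancl: "pe r xs \<subseteq> S \<Longrightarrow> i < j \<Longrightarrow> j < length xs \<Longrightarrow> (xs!i, xs!j) \<in> (edge_rel S)^+"
proof (induction j)
  case 0 thus ?case by simp
next
  case (Suc j)
  have "(xs!j, r, xs!Suc j) \<in> S" using Suc.prems by (auto simp: pe_def)
  hence st: "(xs!j, xs!Suc j) \<in> edge_rel S" by (auto simp: edge_rel_def)
  show ?case
  proof (cases "i = j")
    case True thus ?thesis using st by auto
  next
    case False
    hence "i < j" using Suc.prems(2) by simp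
    hence "(xs!i, xs!j) \<in> (edge_rel S)^+" using Suc.IH Suc.prems(1,3) by simp
    thus ?thesis using st by (rule trancl_into_trancl)
  qed
qed

lemma last_char:
  assumes "pe r xs = S" "xs \<noteq> []" "S \<noteq> {}" "acyclic (edge_rel S)"
  shows "(\<exists>u. (u, r, last xs) \<in> S)" "\<not> (\<exists>w. (last xs, r, w) \<in> S)"
    "\<And>v. (\<exists>u. (u,r,v) \<in> S) \<Longrightarrow> \<not>(\<exists>w. (v,r,w) \<in> S) \<Longrightarrow> v = last xs"
proof -
  have len: "length xs \<ge> 2"
  proof (rule ccontr)
    assume "\<not> ?thesis" hence "length xs < 2" by simp
    hence "pe r xs = {}" by (auto simp: pe_def)
    thus False using assms by simp
  qed
  show "\<exists>u. (u, r, last xs) \<in> S"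
  proof
    define k where "k = length xs - 2"
    have sk: "Suc k = length xs - 1" using len by (simp add: k_def)
    have "(xs ! k, r, xs ! Suc k) \<in> pe r xs" unfolding pe_def
      using sk len by (intro CollectI exI[of _ k]) simp
    moreover have "xs ! Suc k = last xs" using sk last_conv_nth[OF assms(2)] by simp
    ultimately show "(xs ! k, r, last xs) \<in> S" using assms(1) by simp
  qed
  show "\<not> (\<exists>w. (last xs, r, w) \<in> S)"
  proof
    assume "\<exists>w. (last xs, r, w) \<in> S"
    then obtain i where i: "xs ! i = last xs" "Suc i < length xs" using assms(1) by (auto simp: pe_def)
    hence "(xs!i, xs!(length xs - 1)) \<in> (edge_rel S)^+"
      using pe_trancl[of r xs S i "length xs - 1"] assms(1) by auto
    thus False using i assms(2,4) by (simp add: last_conv_nth acyclic_def)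
  qed
  fix v assume a: "\<exists>u. (u,r,v) \<in> S" and b: "\<not>(\<exists>w. (v,r,w) \<in> S)"
  then obtain i where i: "v = xs ! Suc i" "Suc i < length xs" using assms(1) by (auto simp: pe_def)
  show "v = last xs"
  proof (cases "Suc (Suc i) < length xs")
    case True
    hence "(v, r, xs ! Suc (Suc i)) \<in> S" using assms(1) i by (auto simp: pe_def)
    thus ?thesis using b by blast
  next
    case False
    hence "Suc i = length xs - 1" using i by simp
    thus ?thesis using i assms(2) by (simp add: last_conv_nth)
  qed
qed

lemma path_exists:
  "finite S \<Longrightarrow> S \<noteq> {} \<Longrightarrow> \<forall>e\<in>S. fst (snd e) = r \<Longrightarrow> acyclic (edge_rel S) \<Longrightarrow>
   (\<forall>u w. (u,r,w)\<in>S \<and> u \<noteq> Bot \<longrightarrow> (\<exists>x. (x,r,u)\<in>S)) \<Longrightarrow>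
   (\<forall>u w w'. (u,r,w)\<in>S \<and> (u,r,w')\<in>S \<longrightarrow> w = w') \<Longrightarrow>
   \<exists>xs. xs \<noteq> [] \<and> hd xs = Bot \<and> pe r xs = S"
proof (induction "card S" arbitrary: S rule: less_induct)
  case less
  note fin = less.prems(1) and ne = less.prems(2) and lab = less.prems(3) and acy = less.prems(4)
    and bk = less.prems(5) and funS = less.prems(6)
  define R where "R = edge_rel S"
  have "R = (\<lambda>(u,r,v). (u,v)) ` S" by (force simp: R_def edge_rel_def)
  hence finR: "finite R" using fin by simp
  have "wf (R\<inverse>)" using finR acy by (simp add: R_def finite_acyclic_wf acyclic_converse)
  moreover obtain u0 r0 v0 where "(u0, r0, v0) \<in> S" using ne by (metis ex_in_conv prod_cases3)
  hence "v0 \<in> Range R" by (force simp: R_def edge_rel_def)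
  ultimately obtain z where z: "z \<in> Range R" and zmin: "\<And>y. (y, z) \<in> R\<inverse> \<Longrightarrow> y \<notin> Range R"
    by (rule wfE_min) blast
  have sink: "\<not> (\<exists>y. (z, r, y) \<in> S)"
  proof
    assume "\<exists>y. (z, r, y) \<in> S"
    then obtain y where "(z, r, y) \<in> S" by blast
    hence "(z, y) \<in> R" "y \<in> Range R" by (auto simp: R_def edge_rel_def)
    thus False using zmin by auto
  qed
  obtain u r' where "(u, r', z) \<in> S" using z by (auto simp: R_def edge_rel_def)
  hence eS: "(u, r, z) \<in> S" using lab by force
  have uz: "u \<noteq> z" using eS sink by blast
  define S' where "S' = S - {(u, r, z)}"
  show ?case
  proof (cases "S' = {}")
    case True
    hence S1: "S = {(u, r, z)}" using eS by (auto simp: S'_def)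
    have "u = Bot"
    proof (rule ccontr)
      assume "u \<noteq> Bot"
      then obtain x where "(x, r, u) \<in> S" using bk eS by blast
      thus False using S1 uz by auto
    qed
    hence "pe r ([Bot] @ [z]) = S" using S1 pe_snoc[of "[Bot]" r z] by (simp add: pe_single)
    thus ?thesis by (intro exI[of _ "[Bot, z]"]) simp
  next
    case False
    have lt: "card S' < card S" unfolding S'_def by (rule card_Diff1_less[OF fin eS])
    have "\<exists>xs. xs \<noteq> [] \<and> hd xs = Bot \<and> pe r xs = S'"
    proof (rule less.hyps[OF lt])
      show "finite S'" using fin by (simp add: S'_def)
      show "S' \<noteq> {}" by fact
      show "\<forall>e\<in>S'. fst (snd e) = r" using lab by (simp add: S'_def)
      show "acyclic (edge_rel S')" using acy by (rule acyclic_subset) (auto simp: S'_def edge_rel_def)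
      show "\<forall>u' w. (u',r,w)\<in>S' \<and> u' \<noteq> Bot \<longrightarrow> (\<exists>x. (x,r,u')\<in>S')"
      proof (intro allI impI)
        fix u' w assume h: "(u',r,w)\<in>S' \<and> u' \<noteq> Bot"
        then obtain x where x: "(x,r,u') \<in> S" using bk by (auto simp: S'_def)
        have "(x, r, u') \<noteq> (u, r, z)" using h sink by (auto simp: S'_def)
        thus "\<exists>x. (x,r,u')\<in>S'" using x by (auto simp: S'_def)
      qed
      show "\<forall>u w w'. (u,r,w)\<in>S' \<and> (u,r,w')\<in>S' \<longrightarrow> w = w'" using funS by (auto simp: S'_def)
    qed
    then obtain xs where xs: "xs \<noteq> []" "hd xs = Bot" "pe r xs = S'" by blast
    have acy': "acyclic (edge_rel S')" using acy by (rule acyclic_subset) (auto simp: S'_def edge_rel_def)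
    have len: "length xs \<ge> 2"
    proof (rule ccontr)
      assume "\<not> ?thesis" hence "length xs < 2" by simp
      hence "pe r xs = {}" by (auto simp: pe_def)
      thus False using xs False by simp
    qed
    have noout: "\<not> (\<exists>w. (u, r, w) \<in> S')"
    proof
      assume "\<exists>w. (u, r, w) \<in> S'"
      then obtain w where w: "(u, r, w) \<in> S'" by blast
      hence "w = z" using funS eS by (auto simp: S'_def)
      thus False using w by (simp add: S'_def)
    qed
    have "u \<noteq> Bot"
    proof
      assume "u = Bot"
      hence "(u, r, xs ! 1) \<in> S'" using xs len unfolding pe_def
        by (auto simp: hd_conv_nth intro!: exI[of _ 0])
      thus False using noout by blast
    qed
    then obtain x where x: "(x, r, u) \<in> S" using bk eS by blast
    have "(x, r, u) \<noteq> (u, r, z)" using uz by auto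
    hence "\<exists>x. (x, r, u) \<in> S'" using x by (auto simp: S'_def)
    hence "u = last xs" using last_char(3)[OF xs(3) xs(1) False acy'] noout by blast
    hence "pe r (xs @ [z]) = S" using xs eS by (auto simp: pe_snoc S'_def)
    thus ?thesis using xs by (intro exI[of _ "xs @ [z]"]) simp
  qed
qed

lemma last_in:
  assumes "ann_dag (W, FR, FW)"
  shows "last_node r FW \<in> W"
proof (cases "\<exists>u v. (u, r, v) \<in> FW")
  case False
  thus ?thesis using assms by (simp add: last_node_def ann_dag_def)
next
  case True
  define S where "S = {e \<in> FW. fst (snd e) = r}"
  have fW: "finite W" and endp: "\<forall>(u, r, v)\<in>FR \<union> FW. u \<in> W \<and> v \<in> W"
    and acy0: "acyclic (edge_rel (FR \<union> FW))"
    and back0: "\<forall>v' r v. (v', r, v) \<in> FW \<and> v' \<noteq> Bot \<longrightarrow> (\<exists>v''. (v'', r, v') \<in> FW)"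
    and fun0: "\<forall>v r v' v''. (v, r, v') \<in> FW \<and> (v, r, v'') \<in> FW \<longrightarrow> v' = v''"
    using assms by (simp_all add: ann_dag_def)
  have "S \<subseteq> W \<times> {r} \<times> W"
  proof
    fix e assume "e \<in> S"
    then obtain u v where "e = (u,r,v)" "(u,r,v) \<in> FW" by (cases e) (auto simp: S_def)
    hence "(u,r,v) \<in> FR \<union> FW" by simp
    from bspec[OF endp this] have "u \<in> W \<and> v \<in> W" by simp
    thus "e \<in> W \<times> {r} \<times> W" using \<open>e = (u,r,v)\<close> by auto
  qed
  hence finS: "finite S" by (rule finite_subset) (simp add: fW)
  have neS: "S \<noteq> {}" using True by (auto simp: S_def)
  have acy: "acyclic (edge_rel S)" using acy0 by (rule acyclic_subset) (auto simp: S_def edge_rel_def)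
  have "\<exists>xs. xs \<noteq> [] \<and> hd xs = Bot \<and> pe r xs = S"
  proof (rule path_exists[OF finS neS _ acy])
    show "\<forall>e\<in>S. fst (snd e) = r" by (simp add: S_def)
    show "\<forall>u w. (u,r,w)\<in>S \<and> u \<noteq> Bot \<longrightarrow> (\<exists>x. (x,r,u)\<in>S)"
    proof (intro allI impI)
      fix u w assume "(u,r,w)\<in>S \<and> u \<noteq> Bot"
      hence "(u,r,w) \<in> FW" "u \<noteq> Bot" by (auto simp: S_def)
      then obtain x where "(x,r,u) \<in> FW" using back0 by blast
      thus "\<exists>x. (x,r,u)\<in>S" by (auto simp: S_def)
    qed
    show "\<forall>u w w'. (u,r,w)\<in>S \<and> (u,r,w')\<in>S \<longrightarrow> w = w'"
      unfolding S_def using fun0 by blast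
  qed
  then obtain xs where xs: "xs \<noteq> []" "hd xs = Bot" "pe r xs = S" by blast
  define P where "P v \<longleftrightarrow> (\<exists>xs. xs \<noteq> [] \<and> hd xs = Bot \<and> last xs = v \<and> pe r xs = S)" for v
  have "P (last xs)" using xs by (auto simp: P_def)
  moreover have "v = last xs" if "P v" for v
  proof -
    obtain ys where ys: "ys \<noteq> []" "last ys = v" "pe r ys = S" using \<open>P v\<close> by (auto simp: P_def)
    show ?thesis using last_char[OF ys(3) ys(1) neS acy] last_char(3)[OF xs(3) xs(1) neS acy] ys(2) by blast
  qed
  ultimately have "P (THE v. P v)" by (rule theI)
  moreover have "last_node r FW = (THE v. P v)"
    using True by (simp add: last_node_def P_def pe_def S_def)
  ultimately obtain ys where ys: "ys \<noteq> []" "last ys = last_node r FW" "pe r ys = S" by (auto simp: P_def)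
  obtain u where "(u, r, last ys) \<in> S" using last_char(1)[OF ys(3) ys(1) neS acy] by blast
  hence "(u, r, last ys) \<in> FR \<union> FW" by (simp add: S_def)
  from bspec[OF endp this] show ?thesis using ys(2) by simp
qed

lemma acyclic_sink:
  assumes "acyclic R" "\<forall>(u,v)\<in>N. v = x \<and> u \<noteq> x" "x \<notin> Domain R"
  shows "acyclic (R \<union> N)"
proof -
  have key: "(a, b) \<in> R^+ \<or> b = x" if "(a, b) \<in> (R \<union> N)^+" for a b
    using that
  proof (induction rule: trancl_induct)
    case (base y) thus ?case using assms(2) by auto
  next
    case (step y z)
    show ?case
    proof (cases "y = x")
      case True
      thus ?thesis using step.hyps(2) assms(2,3) by auto
    next
      case False
      hence "(a, y) \<in> R^+" using step.IH by auto
      thus ?thesis using step.hyps(2) assms(2) by auto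
    qed
  qed
  show ?thesis unfolding acyclic_def
  proof
    fix y show "(y, y) \<notin> (R \<union> N)^+"
    proof
      assume h: "(y, y) \<in> (R \<union> N)^+"
      show False
      proof (cases "(y,y) \<in> R^+")
        case True thus False using assms(1) by (simp add: acyclic_def)
      next
        case False
        hence "y = x" using key[OF h] by simp
        from h obtain z where "(y, z) \<in> R \<union> N" by (meson converse_tranclE)
        thus False using \<open>y = x\<close> assms(2,3) by auto
      qed
    qed
  qed
qed

lemma ext_dag:
  assumes B: "ann_dag (W, FR, FW)" and C: "ann_dag (W', CR, CW)"
    and xW: "x \<notin> W" and NRC: "NR \<subseteq> CR" and NWC: "NW \<subseteq> CW"
    and Nend: "\<forall>(u,r,v)\<in>NR \<union> NW. u \<in> W \<and> v = x"
    and dc: "\<forall>p n. Nd p n = x \<longrightarrow> is_pid p \<and> (\<forall>n'\<le>n. Nd p n' \<in> W \<union> {x})"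
    and CWF: "\<forall>(u,r,v)\<in>CW. v \<in> W \<longrightarrow> (u,r,v) \<in> FW"
    and FWC: "\<forall>v r w. (v,r,w) \<in> FW \<and> (\<exists>u. (u,r,x) \<in> NW) \<longrightarrow> (v,r,w) \<in> CW"
  shows "ann_dag (W \<union> {x}, FR \<union> NR, FW \<union> NW)"
proof -
  have B1: "finite W" and B2: "Bot \<in> W"
    and B3: "\<forall>p n. Nd p n \<in> W \<longrightarrow> is_pid p \<and> (\<forall>n'\<le>n. Nd p n' \<in> W)"
    and B4: "\<forall>(u, r, v)\<in>FR \<union> FW. u \<in> W \<and> v \<in> W"
    and B5: "\<forall>v' v'' r v. (v', r, v) \<in> FR \<union> FW \<and> (v'', r, v) \<in> FR \<union> FW \<longrightarrow> v' = v''"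
    and B6: "FR \<inter> FW = {}" and B7: "acyclic (edge_rel (FR \<union> FW))"
    and B8: "\<forall>v' r v. (v', r, v) \<in> FW \<and> v' \<noteq> Bot \<longrightarrow> (\<exists>v''. (v'', r, v') \<in> FW)"
    and B9: "\<forall>v r v' v''. (v, r, v') \<in> FW \<and> (v, r, v'') \<in> FW \<longrightarrow> v' = v''"
    using B by (simp_all add: ann_dag_def)
  have C5: "\<forall>v' v'' r v. (v', r, v) \<in> CR \<union> CW \<and> (v'', r, v) \<in> CR \<union> CW \<longrightarrow> v' = v''"
    and C6: "CR \<inter> CW = {}"
    and C8: "\<forall>v' r v. (v', r, v) \<in> CW \<and> v' \<noteq> Bot \<longrightarrow> (\<exists>v''. (v'', r, v') \<in> CW)"
    and C9: "\<forall>v r v' v''. (v, r, v') \<in> CW \<and> (v, r, v'') \<in> CW \<longrightarrow> v' = v''"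
    using C by (simp_all add: ann_dag_def)
  have Fin: "\<And>u r v. (u,r,v) \<in> FR \<union> FW \<Longrightarrow> u \<in> W \<and> v \<in> W"
  proof -
    fix u r v assume "(u,r,v) \<in> FR \<union> FW" from bspec[OF B4 this] show "u \<in> W \<and> v \<in> W" by simp
  qed
  have Nin: "\<And>u r v. (u,r,v) \<in> NR \<union> NW \<Longrightarrow> u \<in> W \<and> v = x"
  proof -
    fix u r v assume "(u,r,v) \<in> NR \<union> NW" from bspec[OF Nend this] show "u \<in> W \<and> v = x" by simp
  qed
  show ?thesis unfolding ann_dag_def prod.case
  proof (intro conjI)
    show "finite (W \<union> {x})" using B1 by simp
    show "Bot \<in> W \<union> {x}" using B2 by simp
    show "\<forall>p n. Nd p n \<in> W \<union> {x} \<longrightarrow> is_pid p \<and> (\<forall>n'\<le>n. Nd p n' \<in> W \<union> {x})"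
      using B3 dc by blast
    show "\<forall>(u, r, v)\<in>FR \<union> NR \<union> (FW \<union> NW). u \<in> W \<union> {x} \<and> v \<in> W \<union> {x}"
    proof (intro ballI, clarify)
      fix u r v assume "(u,r,v) \<in> FR \<union> NR \<union> (FW \<union> NW)"
      thus "u \<in> W \<union> {x} \<and> v \<in> W \<union> {x}" using Fin Nin by blast
    qed
    show "\<forall>v' v'' r v. (v', r, v) \<in> FR \<union> NR \<union> (FW \<union> NW) \<and> (v'', r, v) \<in> FR \<union> NR \<union> (FW \<union> NW) \<longrightarrow> v' = v''"
    proof (intro allI impI)
      fix v' v'' r v assume h: "(v', r, v) \<in> FR \<union> NR \<union> (FW \<union> NW) \<and> (v'', r, v) \<in> FR \<union> NR \<union> (FW \<union> NW)"
      show "v' = v''"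
      proof (cases "v = x")
        case True
        hence "(v', r, v) \<in> NR \<union> NW" "(v'', r, v) \<in> NR \<union> NW" using h Fin xW by blast+
        hence "(v', r, v) \<in> CR \<union> CW" "(v'', r, v) \<in> CR \<union> CW" using NRC NWC by blast+
        thus ?thesis using C5 by blast
      next
        case False
        hence "(v', r, v) \<in> FR \<union> FW" "(v'', r, v) \<in> FR \<union> FW" using h Nin by blast+
        thus ?thesis using B5 by blast
      qed
    qed
    show "(FR \<union> NR) \<inter> (FW \<union> NW) = {}"
    proof (rule ccontr)
      assume "(FR \<union> NR) \<inter> (FW \<union> NW) \<noteq> {}"
      then obtain u r v where h: "(u,r,v) \<in> FR \<union> NR" "(u,r,v) \<in> FW \<union> NW"
        by (metis disjoint_iff prod_cases3)
      show False
      proof (cases "v = x")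
        case True
        hence "(u,r,v) \<in> NR" "(u,r,v) \<in> NW" using h Fin xW by blast+
        thus False using NRC NWC C6 by blast
      next
        case False
        hence "(u,r,v) \<in> FR" "(u,r,v) \<in> FW" using h Nin by blast+
        thus False using B6 by blast
      qed
    qed
    show "acyclic (edge_rel (FR \<union> NR \<union> (FW \<union> NW)))"
    proof -
      have eq: "edge_rel (FR \<union> NR \<union> (FW \<union> NW)) = edge_rel (FR \<union> FW) \<union> edge_rel (NR \<union> NW)"
        by (auto simp: edge_rel_def)
      have "\<forall>(u,v)\<in>edge_rel (NR \<union> NW). v = x \<and> u \<noteq> x"
        using Nin xW by (auto simp: edge_rel_def)
      moreover have "x \<notin> Domain (edge_rel (FR \<union> FW))"
        using Fin xW by (auto simp: edge_rel_def)
      ultimately show ?thesis unfolding eq using acyclic_sink[OF B7] by blast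
    qed
    show "\<forall>v' r v. (v', r, v) \<in> FW \<union> NW \<and> v' \<noteq> Bot \<longrightarrow> (\<exists>v''. (v'', r, v') \<in> FW \<union> NW)"
    proof (intro allI impI)
      fix v' r v assume h: "(v', r, v) \<in> FW \<union> NW \<and> v' \<noteq> Bot"
      show "\<exists>v''. (v'', r, v') \<in> FW \<union> NW"
      proof (cases "(v', r, v) \<in> FW")
        case True thus ?thesis using B8 h by blast
      next
        case False
        hence n: "(v', r, v) \<in> NW" using h by blast
        hence "v' \<in> W" using Nin by blast
        obtain v'' where "(v'', r, v') \<in> CW" using C8 n NWC h by blast
        hence "(v'', r, v') \<in> FW" using CWF \<open>v' \<in> W\<close> by blast
        thus ?thesis by blast
      qed
    qed
    show "\<forall>v r v' v''. (v, r, v') \<in> FW \<union> NW \<and> (v, r, v'') \<in> FW \<union> NW \<longrightarrow> v' = v''"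
    proof (intro allI impI)
      fix v r v' v'' assume h: "(v, r, v') \<in> FW \<union> NW \<and> (v, r, v'') \<in> FW \<union> NW"
      have mix: False if a: "(v, r, w) \<in> FW" and b: "(v, r, w') \<in> NW" for w w'
      proof -
        have "w' = x" using b Nin by blast
        hence "(v, r, w) \<in> CW" using FWC a b by blast
        moreover have "(v, r, w') \<in> CW" using b NWC by blast
        ultimately have "w = x" using C9 \<open>w' = x\<close> by blast
        moreover have "w \<in> W" using a Fin by blast
        ultimately show False using xW by simp
      qed
      show "v' = v''"
      proof (cases "(v, r, v') \<in> FW")
        case True
        show ?thesis
        proof (cases "(v, r, v'') \<in> FW")
          case True thus ?thesis using \<open>(v, r, v') \<in> FW\<close> B9 by blast
        next
          case False thus ?thesis using mix[OF \<open>(v, r, v') \<in> FW\<close>] h by blast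
        qed
      next
        case False
        hence n1: "(v, r, v') \<in> NW" using h by blast
        show ?thesis
        proof (cases "(v, r, v'') \<in> FW")
          case True thus ?thesis using mix[OF True n1] by blast
        next
          case False
          hence "(v, r, v'') \<in> NW" using h by blast
          thus ?thesis using n1 NWC C9 by blast
        qed
      qed
    qed
  qed
qed

lemma fresh_node:
  assumes "finite V" shows "Nd p (nat (maxp V p + 1)) \<notin> V"
proof
  assume h: "Nd p (nat (maxp V p + 1)) \<in> V"
  hence ex: "\<exists>n. Nd p n \<in> V" by blast
  have fin: "finite {n. Nd p n \<in> V}"
    using finite_vimageI[OF assms, of "Nd p"] by (simp add: inj_def vimage_def)
  have "nat (maxp V p + 1) = Suc (Max {n. Nd p n \<in> V})" using ex by (simp add: maxp_def)
  hence "Suc (Max {n. Nd p n \<in> V}) \<in> {n. Nd p n \<in> V}" using h by simp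
  from Max_ge[OF fin this] show False by simp
qed

lemma maxp_ins: "p \<noteq> q \<Longrightarrow> maxp (insert (Nd q k) V) p = maxp V p"
  by (simp add: maxp_def)

lemma last_cong: "{e \<in> E1. fst (snd e) = r} = {e \<in> E2. fst (snd e) = r} \<Longrightarrow> last_node r E1 = last_node r E2"
proof -
  assume h: "{e \<in> E1. fst (snd e) = r} = {e \<in> E2. fst (snd e) = r}"
  have "(\<exists>u v. (u, r, v) \<in> E1) = (\<exists>u v. (u, r, v) \<in> E2)"
  proof
    assume "\<exists>u v. (u, r, v) \<in> E1"
    then obtain u v where "(u, r, v) \<in> {e \<in> E1. fst (snd e) = r}" by auto
    thus "\<exists>u v. (u, r, v) \<in> E2" unfolding h by auto
  next
    assume "\<exists>u v. (u, r, v) \<in> E2"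
    then obtain u v where "(u, r, v) \<in> {e \<in> E2. fst (snd e) = r}" by auto
    thus "\<exists>u v. (u, r, v) \<in> E1" unfolding h[symmetric] by auto
  qed
  thus ?thesis unfolding last_node_def h by simp
qed

lemma edge_tgt: "ann_dag (V, ER, EW) \<Longrightarrow> (u, r, v) \<in> ER \<union> EW \<Longrightarrow> v \<in> V"
proof -
  assume d: "ann_dag (V, ER, EW)" and e: "(u, r, v) \<in> ER \<union> EW"
  have "\<forall>(u, r, v)\<in>ER \<union> EW. u \<in> V \<and> v \<in> V" using d by (simp add: ann_dag_def)
  from bspec[OF this e] show "v \<in> V" by simp
qed

lemma disj_new:
  assumes "\<And>u r v. (u,r,v) \<in> N \<Longrightarrow> v = x" "\<And>u r v. (u,r,v) \<in> E \<Longrightarrow> v \<in> V" "x \<notin> V"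
  shows "N \<inter> E = {}"
proof (rule ccontr)
  assume "N \<inter> E \<noteq> {}"
  then obtain u r v where h: "(u,r,v) \<in> N" "(u,r,v) \<in> E" by (metis disjoint_iff prod_cases3)
  have "v = x" using assms(1)[OF h(1)] .
  moreover have "v \<in> V" using assms(2)[OF h(2)] .
  ultimately show False using assms(3) by simp
qed

lemma ann_step_iff: "ann_step (V1, ER1, EW1) (p, Rd, Wt) (V2, ER2, EW2) \<longleftrightarrow>
  ann_dag (V1, ER1, EW1) \<and> ann_dag (V2, ER2, EW2) \<and>
  V2 = V1 \<union> {Nd p (nat (maxp V1 p + 1))} \<and>
  ER2 = ER1 \<union> {newedge r EW1 (Nd p (nat (maxp V1 p + 1))) | r. r \<in> Rd - Wt} \<and>
  EW2 = EW1 \<union> {newedge r EW1 (Nd p (nat (maxp V1 p + 1))) | r. r \<in> Wt}"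
  by (simp add: ann_step_def Let_def)

theorem mainTheorem3:
  fixes a :: "'r lab" and \<beta> :: "'r blab" and A A' A'' :: "'r ann"
  assumes "is_pid (fst a)" and "is_pid (fst (und \<beta>))"
    and "snd (snd a) \<subseteq> fst (snd a)"
    and "snd (snd (und \<beta>)) \<subseteq> fst (snd (und \<beta>))"
    and "ann_trans A (Fw a) A'" and "ann_trans A \<beta> A''"
    and "iota_lab (Fw a) \<beta>"
  shows "\<exists>A'''. ann_trans A'' (Fw a) A''' \<and>
           ann_diff A (Fw a) A' = ann_diff A'' (Fw a) A'''"
proof -
  obtain pa Ra Wa where a: "a = (pa, Ra, Wa)" by (cases a)
  obtain V ER EW where A: "A = (V, ER, EW)" by (cases A)
  obtain V' ER' EW' where A': "A' = (V', ER', EW')" by (cases A')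
  obtain V'' ER'' EW'' where A'': "A'' = (V'', ER'', EW'')" by (cases A'')
  obtain pb Rb Wb where ub: "und \<beta> = (pb, Rb, Wb)" by (cases "und \<beta>")
  define va where "va = Nd pa (nat (maxp V pa + 1))"
  define NR where "NR = {newedge r EW va | r. r \<in> Ra - Wa}"
  define NW where "NW = {newedge r EW va | r. r \<in> Wa}"
  have dA: "ann_dag (V, ER, EW)" and dA': "ann_dag (V', ER', EW')"
    and V': "V' = V \<union> {va}" and ER': "ER' = ER \<union> NR" and EW': "EW' = EW \<union> NW"
    using assms(5) unfolding A A' a ann_trans.simps ann_step_iff va_def[symmetric] NR_def[symmetric] NW_def[symmetric]
    by blast+
  have pid: "is_pid pa" using assms(1) a by simp
  have WaRa: "Wa \<subseteq> Ra" using assms(3) a by simp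
  have WbRb: "Wb \<subseteq> Rb" using assms(4) ub by simp
  have io: "\<not> prefix pa pb" "Ra \<inter> Wb = {}" "Rb \<inter> Wa = {}"
    using assms(7) by (simp_all add: iota_lab_def a ub)
  have pab: "pa \<noteq> pb" using io(1) by auto
  have finV: "finite V" using dA by (simp add: ann_dag_def)
  have vaV: "va \<notin> V" unfolding va_def by (rule fresh_node[OF finV])
  have dcA': "\<forall>n'\<le>nat (maxp V pa + 1). Nd pa n' \<in> V'"
  proof -
    have "\<forall>p n. Nd p n \<in> V' \<longrightarrow> is_pid p \<and> (\<forall>n'\<le>n. Nd p n' \<in> V')" using dA' by (simp add: ann_dag_def)
    moreover have "Nd pa (nat (maxp V pa + 1)) \<in> V'" using V' va_def by simp
    ultimately show ?thesis by blast
  qed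
  have NWlab: "\<And>u r v. (u, r, v) \<in> NW \<Longrightarrow> r \<in> Wa \<and> v = va" by (auto simp: NW_def newedge_def)
  have NRlab: "\<And>u r v. (u, r, v) \<in> NR \<Longrightarrow> r \<in> Ra \<and> v = va" by (auto simp: NR_def newedge_def)
  have common: "maxp V'' pa = maxp V pa \<and> (\<forall>r\<in>Ra. last_node r EW'' = last_node r EW) \<and>
      ann_dag (V'', ER'', EW'') \<and> va \<notin> V'' \<and> (\<forall>n'\<le>nat (maxp V pa + 1). Nd pa n' \<in> V'' \<union> {va}) \<and>
      (\<forall>(u,r,v)\<in>EW'. v \<in> V'' \<longrightarrow> (u,r,v) \<in> EW'') \<and>
      (\<forall>v r w. (v,r,w) \<in> EW'' \<and> r \<in> Wa \<longrightarrow> (v,r,w) \<in> EW')"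
  proof (cases \<beta>)
    case (Fw b)
    hence b: "b = (pb, Rb, Wb)" using ub by simp
    define vb where "vb = Nd pb (nat (maxp V pb + 1))"
    define MW where "MW = {newedge r EW vb | r. r \<in> Wb}"
    have dA'': "ann_dag (V'', ER'', EW'')" and V'': "V'' = V \<union> {vb}" and EW'': "EW'' = EW \<union> MW"
      using assms(6) unfolding Fw b A A'' ann_trans.simps ann_step_iff vb_def[symmetric] MW_def[symmetric]
      by blast+
    have MWlab: "\<And>u r v. (u, r, v) \<in> MW \<Longrightarrow> r \<in> Wb" by (auto simp: MW_def newedge_def)
    have vab: "va \<noteq> vb" using pab by (simp add: va_def vb_def)
    have vaV'': "va \<notin> V''" using vaV vab V'' by simp
    show ?thesis
    proof (intro conjI)
      show "maxp V'' pa = maxp V pa" unfolding V'' vb_def using pab by (simp add: maxp_ins)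
      show "\<forall>r\<in>Ra. last_node r EW'' = last_node r EW"
      proof
        fix r assume r: "r \<in> Ra"
        show "last_node r EW'' = last_node r EW"
        proof (rule last_cong)
          show "{e \<in> EW''. fst (snd e) = r} = {e \<in> EW. fst (snd e) = r}"
            using r io(2) MWlab unfolding EW'' by fastforce
        qed
      qed
      show "ann_dag (V'', ER'', EW'')" by fact
      show "va \<notin> V''" by fact
      show "\<forall>n'\<le>nat (maxp V pa + 1). Nd pa n' \<in> V'' \<union> {va}" using dcA' V' V'' by blast
      show "\<forall>(u,r,v)\<in>EW'. v \<in> V'' \<longrightarrow> (u,r,v) \<in> EW''"
        using NWlab vaV'' unfolding EW' EW'' by blast
      show "\<forall>v r w. (v,r,w) \<in> EW'' \<and> r \<in> Wa \<longrightarrow> (v,r,w) \<in> EW'"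
        using MWlab WaRa io(2) unfolding EW' EW'' by blast
    qed
  next
    case (Bw b)
    hence b: "b = (pb, Rb, Wb)" using ub by simp
    define vb where "vb = Nd pb (nat (maxp V'' pb + 1))"
    define MW where "MW = {newedge r EW'' vb | r. r \<in> Wb}"
    have dA'': "ann_dag (V'', ER'', EW'')" and V: "V = V'' \<union> {vb}" and EW: "EW = EW'' \<union> MW"
      using assms(6) unfolding Bw b A A'' ann_trans.simps ann_step_iff vb_def[symmetric] MW_def[symmetric]
      by blast+
    have MWlab: "\<And>u r v. (u, r, v) \<in> MW \<Longrightarrow> r \<in> Wb \<and> v = vb" by (auto simp: MW_def newedge_def)
    have finV'': "finite V''" using dA'' by (simp add: ann_dag_def)
    have vbV: "vb \<notin> V''" unfolding vb_def by (rule fresh_node[OF finV''])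
    have vaV'': "va \<notin> V''" using vaV V by simp
    show ?thesis
    proof (intro conjI)
      show "maxp V'' pa = maxp V pa" unfolding V vb_def using pab by (simp add: maxp_ins)
      show "\<forall>r\<in>Ra. last_node r EW'' = last_node r EW"
      proof
        fix r assume r: "r \<in> Ra"
        show "last_node r EW'' = last_node r EW"
        proof (rule last_cong)
          show "{e \<in> EW''. fst (snd e) = r} = {e \<in> EW. fst (snd e) = r}"
            using r io(2) MWlab unfolding EW by fastforce
        qed
      qed
      show "ann_dag (V'', ER'', EW'')" by fact
      show "va \<notin> V''" by fact
      show "\<forall>n'\<le>nat (maxp V pa + 1). Nd pa n' \<in> V'' \<union> {va}" using dcA' V' V pab unfolding vb_def by blast
      show "\<forall>(u,r,v)\<in>EW'. v \<in> V'' \<longrightarrow> (u,r,v) \<in> EW''"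
        using NWlab MWlab vaV'' vbV unfolding EW' EW by blast
      show "\<forall>v r w. (v,r,w) \<in> EW'' \<and> r \<in> Wa \<longrightarrow> (v,r,w) \<in> EW'"
        unfolding EW' EW by blast
    qed
  qed
  have mx: "maxp V'' pa = maxp V pa" and lst: "\<forall>r\<in>Ra. last_node r EW'' = last_node r EW"
    and dA'': "ann_dag (V'', ER'', EW'')" and vaV'': "va \<notin> V''"
    and dc'': "\<forall>n'\<le>nat (maxp V pa + 1). Nd pa n' \<in> V'' \<union> {va}"
    and CWF: "\<forall>(u,r,v)\<in>EW'. v \<in> V'' \<longrightarrow> (u,r,v) \<in> EW''"
    and FWC0: "\<forall>v r w. (v,r,w) \<in> EW'' \<and> r \<in> Wa \<longrightarrow> (v,r,w) \<in> EW'"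
    using common by blast+
  have NR'': "{newedge r EW'' va | r. r \<in> Ra - Wa} = NR"
    unfolding NR_def newedge_def using lst by force
  have NW'': "{newedge r EW'' va | r. r \<in> Wa} = NW"
    unfolding NW_def newedge_def using lst WaRa by force
  have srcs: "\<forall>(u,r,v)\<in>NR \<union> NW. u \<in> V'' \<and> v = va"
  proof (intro ballI, clarify)
    fix u r v assume h: "(u, r, v) \<in> NR \<union> NW"
    hence "r \<in> Ra" "v = va" "u = last_node r EW" using WaRa
      by (auto simp: NR_def NW_def newedge_def)
    moreover have "last_node r EW'' \<in> V''" by (rule last_in[OF dA''])
    ultimately show "u \<in> V'' \<and> v = va" using lst by simp
  qed
  define A3 where "A3 = (V'' \<union> {va}, ER'' \<union> NR, EW'' \<union> NW)"
  have dA3: "ann_dag (V'' \<union> {va}, ER'' \<union> NR, EW'' \<union> NW)"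
  proof (rule ext_dag[OF dA'' dA' vaV''])
    show "NR \<subseteq> ER'" using ER' by blast
    show "NW \<subseteq> EW'" using EW' by blast
    show "\<forall>(u,r,v)\<in>NR \<union> NW. u \<in> V'' \<and> v = va" by (rule srcs)
    show "\<forall>p n. Nd p n = va \<longrightarrow> is_pid p \<and> (\<forall>n'\<le>n. Nd p n' \<in> V'' \<union> {va})"
      using pid dc'' by (simp add: va_def)
    show "\<forall>(u,r,v)\<in>EW'. v \<in> V'' \<longrightarrow> (u,r,v) \<in> EW''" by (rule CWF)
    show "\<forall>v r w. (v,r,w) \<in> EW'' \<and> (\<exists>u. (u,r,va) \<in> NW) \<longrightarrow> (v,r,w) \<in> EW'"
      using FWC0 NWlab by blast
  qed
  have step: "ann_trans A'' (Fw a) A3"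
    unfolding A'' A3_def a ann_trans.simps ann_step_iff using dA'' dA3 mx NR'' NW''
    by (simp add: va_def)
  have d1: "ann_diff A (Fw a) A' = ({va}, NR, NW)"
  proof -
    have "NR \<inter> ER = {}" using disj_new[of NR va ER V] NRlab edge_tgt[OF dA] vaV by blast
    moreover have "NW \<inter> EW = {}" using disj_new[of NW va EW V] NWlab edge_tgt[OF dA] vaV by blast
    ultimately show ?thesis using vaV by (auto simp: A A' V' ER' EW')
  qed
  have d2: "ann_diff A'' (Fw a) A3 = ({va}, NR, NW)"
  proof -
    have "NR \<inter> ER'' = {}" using disj_new[of NR va ER'' V''] NRlab edge_tgt[OF dA''] vaV'' by blast
    moreover have "NW \<inter> EW'' = {}" using disj_new[of NW va EW'' V''] NWlab edge_tgt[OF dA''] vaV'' by blast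
    ultimately show ?thesis using vaV'' by (auto simp: A'' A3_def)
  qed
  show ?thesis
  proof (intro exI conjI)
    show "ann_trans A'' (Fw a) A3" by (rule step)
    show "ann_diff A (Fw a) A' = ann_diff A'' (Fw a) A3" unfolding d1 d2 ..
  qed
qed

end
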